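(* For all integers $L\ge 0$ and $n\ge 1$, $$S_L(n+2,n)=\frac{n(n+1)(n+2)}{3\cdot 2^3}\left[\frac{(n+2)!}{2}\right]^{L}\left(\frac{3}{2^L}(n-1)+\frac{4}{3^L}\right).$$ In particular, $S_0(n+2,n)=\frac{n(n+1)(n+2)(3n+1)}{4!}$.
   Context: For an integer $L\ge 0$ let ${}_0F_L(z)=\sum_{n=0}^{\infty}\frac{z^n}{(n!)^{L+1}}$. Define the numbers $S_L(n,l)$ ($n,l\ge 0$) by the formal power series identities $\frac{({}_0F_L(z)-1)^l}{l!}=\sum_{n\ge l}\frac{S_L(n,l)}{(n!)^{L+1}}z^n$ for each $l\ge 0$. In particular $S_0(n,l)$ are the Stirling numbers of the second kind. *)

theory Defs
  imports "HOL-Computational_Algebra.Formal_Power_Series"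
begin

definition hyp0F :: "nat \<Rightarrow> real fps" where
  "hyp0F L = Abs_fps (\<lambda>n. 1 / (fact n) ^ (L + 1))"

definition S_L :: "nat \<Rightarrow> nat \<Rightarrow> nat \<Rightarrow> real" where
  "S_L L n l = (fact n) ^ (L + 1) * fps_nth ((hyp0F L - 1) ^ l) n / fact l"

end

theory Submission
  imports Defs
begin

lemma pow_coeffs:
  fixes G :: "real fps"
  assumes "fps_nth G 0 = 1"
  shows "fps_nth (G ^ n) 0 = 1 \<and> fps_nth (G ^ n) 1 = real n * fps_nth G 1 \<and>
         fps_nth (G ^ n) 2 = real n * fps_nth G 2 + real n * (real n - 1) / 2 * (fps_nth G 1)^2"
proof (induction n)
  case 0
  then show ?case by simp
next
  case (Suc n)
  have e: "fps_nth (G ^ Suc n) 2 = fps_nth G 0 * fps_nth (G^n) 2 + fps_nth G 1 * fps_nth (G^n) 1 + fps_nth G 2 * fps_nth (G^n) 0"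
    by (simp add: fps_mult_nth numeral_2_eq_2 sum.atLeast_Suc_atMost)
  show ?case using Suc assms unfolding e
    by (auto simp: fps_mult_nth_1 field_simps power2_eq_square)
qed

lemma decomp: "hyp0F L - 1 = fps_X * Abs_fps (\<lambda>k. 1 / (fact (k+1)) ^ (L + 1))"
  by (rule fps_ext) (auto simp: hyp0F_def gr0_conv_Suc)

lemma key:
  assumes "n \<ge> 1"
  shows "S_L L (n + 2) n =
             real (n * (n + 1) * (n + 2)) / (3 * 2 ^ 3) * (fact (n + 2) / 2) ^ L *
             (3 / 2 ^ L * (real n - 1) + 4 / 3 ^ L)"
proof -
  define G where "G = Abs_fps (\<lambda>k. 1 / (fact (k+1)) ^ (L + 1) :: real)"
  have G0: "fps_nth G 0 = 1" by (simp add: G_def)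
  have "fps_nth ((hyp0F L - 1) ^ n) (n+2) = fps_nth (G ^ n) 2"
    unfolding decomp G_def[symmetric] power_mult_distrib
    by (simp add: fps_X_power_mult_nth)
  also have "\<dots> = real n * fps_nth G 2 + real n * (real n - 1) / 2 * (fps_nth G 1)^2"
    using pow_coeffs[OF G0] by blast
  also have "\<dots> = real n / 6^(L+1) + real n * (real n - 1) / 2 / 4^(L+1)"
    by (simp add: G_def numeral_2_eq_2 fact_numeral power_one_over power_mult_distrib[symmetric]
        flip: power_mult)
  finally have c: "fps_nth ((hyp0F L - 1) ^ n) (n+2) = real n / 6^(L+1) + real n * (real n - 1) / 2 / 4^(L+1)" .
  have f: "(fact (n+2) :: real) = fact n * ((real n + 1) * (real n + 2))"
    by (simp add: fact_Suc numeral_2_eq_2 algebra_simps)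
  have fn: "(fact n :: real) > 0" by simp
  have p6: "(6::real)^L = 2^L * 3^L" by (simp flip: power_mult_distrib)
  have p4: "(4::real)^L = 2^L * 2^L" by (simp flip: power_mult_distrib)
  show ?thesis
    unfolding S_L_def c
    apply (subst (1 2) f)
    using fn
    apply (simp add: power_mult_distrib p6 p4 field_simps)
    done
qed

theorem mainTheorem5:
  shows "(\<forall>L n::nat. n \<ge> 1 \<longrightarrow>
           S_L L (n + 2) n =
             real (n * (n + 1) * (n + 2)) / (3 * 2 ^ 3) * (fact (n + 2) / 2) ^ L *
             (3 / 2 ^ L * (real n - 1) + 4 / 3 ^ L))
       \<and> (\<forall>n::nat. n \<ge> 1 \<longrightarrow>
           S_L 0 (n + 2) n = real (n * (n + 1) * (n + 2) * (3 * n + 1)) / fact 4)"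
proof (intro conjI allI impI)
  fix L n :: nat assume "n \<ge> 1"
  then show "S_L L (n + 2) n =
             real (n * (n + 1) * (n + 2)) / (3 * 2 ^ 3) * (fact (n + 2) / 2) ^ L *
             (3 / 2 ^ L * (real n - 1) + 4 / 3 ^ L)" by (rule key)
next
  fix n :: nat assume "n \<ge> 1"
  then show "S_L 0 (n + 2) n = real (n * (n + 1) * (n + 2) * (3 * n + 1)) / fact 4"
    using key[of n 0] by (simp add: fact_numeral algebra_simps)
qed

end
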